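(* For every $k\in\mathbb{N}$ and $w\in\mathbb{W}_k$, the bridge $(U_0^w,\dots,U_k^w)$ from the empty word to $w$ satisfies, for all $0\le m\le k-1$, $v\in\mathbb{W}_{m+1}$ (with $\mathbb{P}\{U_{m+1}^w=v\}>0$) and $u\in\mathbb{W}_m$, \[ \mathbb{P}\{U_m^{w} = u \mid U_{m+1}^{w} = v\} = \frac{\binom{v}{u}}{(m+1)^2}. \] In particular the backward transition dynamics of all bridges from the empty word are the same and consist of removing, at each step, one letter $a$ and one letter $b$ chosen uniformly at random (independently) from the current word.
   Context: For $n \in \mathbb{N}_0$, $\mathbb{W}_n$ denotes the set of words over the alphabet $\{a,b\}$ with exactly $n$ letters $a$ and $n$ letters $b$, and $\mathbb{W} := \bigsqcup_{n} \mathbb{W}_n$. For words $w,v$, $\binom{w}{v}$ denotes the number of occurrences of $v$ as a (not necessarily contiguous) sub-word of $w$. The Markov chain $(U_n)_{n\in\mathbb{N}_0}$ on $\mathbb{W}$ starts at the empty word; given $U_n \in \mathbb{W}_n$, first a letter $a$ is inserted uniformly at random into one of the $2n+1$ slots of $U_n$, then a letter $b$ is inserted uniformly at random into one of the $2n+2$ slots of the resulting word, giving $U_{n+1}$. For $w\in\mathbb{W}_k$, the bridge $(U_0^w,\dots,U_k^w)$ is the process $(U_0,\dots,U_k)$ conditioned on the event $\{U_k=w\}$. *)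

theory Defs
  imports "HOL-Probability.Probability"
begin

datatype letter = La | Lb

type_synonym word = "letter list"

definition W :: "nat \<Rightarrow> word set" where
  "W n = {w. count_list w La = n \<and> count_list w Lb = n}"

definition subword_count :: "word \<Rightarrow> word \<Rightarrow> nat" where
  "subword_count w v = card {I. I \<subseteq> {0..<length w} \<and> card I = length v \<and> nths w I = v}"

definition insert_at :: "nat \<Rightarrow> letter \<Rightarrow> word \<Rightarrow> word" where
  "insert_at i x u = take i u @ [x] @ drop i u"

definition step_pmf :: "word \<Rightarrow> word pmf" where
  "step_pmf u =
     pmf_of_set {0..length u} \<bind> (\<lambda>i. let u' = insert_at i La u in
     pmf_of_set {0..length u'} \<bind> (\<lambda>j. return_pmf (insert_at j Lb u')))"

fun path_pmf :: "nat \<Rightarrow> word list pmf" where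
  "path_pmf 0 = return_pmf [[]]"
| "path_pmf (Suc k) = path_pmf k \<bind> (\<lambda>p. map_pmf (\<lambda>v. p @ [v]) (step_pmf (last p)))"

definition bridge_pmf :: "nat \<Rightarrow> word \<Rightarrow> word list pmf" where
  "bridge_pmf k w = cond_pmf (path_pmf k) {p. p ! k = w}"

definition bridge_back_prob :: "nat \<Rightarrow> word \<Rightarrow> nat \<Rightarrow> word \<Rightarrow> word \<Rightarrow> real" where
  "bridge_back_prob k w m u v =
     measure_pmf.prob (bridge_pmf k w) {p. p ! m = u \<and> p ! Suc m = v}
     / measure_pmf.prob (bridge_pmf k w) {p. p ! Suc m = v}"

end

theory Submission
  imports Defs
begin

definition del :: "nat \<Rightarrow> word \<Rightarrow> word" where
  "del p v = take p v @ drop (Suc p) v"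

lemma del_Suc_Cons[simp]: "del (Suc p) (x#xs) = x # del p xs"
  by (simp add: del_def)

lemma del_0_Cons[simp]: "del 0 (x#xs) = xs"
  by (simp add: del_def)

lemma length_del[simp]: "p < length v \<Longrightarrow> length (del p v) = length v - 1"
  by (simp add: del_def)

lemma length_insert_at[simp]: "i \<le> length u \<Longrightarrow> length (insert_at i x u) = Suc (length u)"
  by (simp add: insert_at_def)

lemma count_del: "p < length v \<Longrightarrow> count_list v x = count_list (del p v) x + (if v!p = x then 1 else 0)"
proof -
  assume p: "p < length v"
  have "v = take p v @ [v!p] @ drop (Suc p) v" using p by (simp add: id_take_nth_drop)
  then have "count_list v x = count_list (take p v @ [v!p] @ drop (Suc p) v) x" by simp
  also have "\<dots> = count_list (del p v) x + (if v!p = x then 1 else 0)"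
    by (simp add: del_def)
  finally show ?thesis .
qed

lemma count_insert_at: "i \<le> length u \<Longrightarrow> count_list (insert_at i x u) y = count_list u y + (if x = y then 1 else 0)"
proof -
  assume "i \<le> length u"
  have "count_list u y = count_list (take i u @ drop i u) y" by simp
  then show ?thesis unfolding insert_at_def by (simp only: count_list_append) simp
qed

lemma insert_del: "p < length v \<Longrightarrow> insert_at p (v!p) (del p v) = v"
  by (simp add: insert_at_def del_def id_take_nth_drop[symmetric] min_def)

lemma del_insert: "i \<le> length u \<Longrightarrow> del i (insert_at i x u) = u"
  by (simp add: insert_at_def del_def)

lemma nth_insert_at: "i \<le> length u \<Longrightarrow> (insert_at i x u) ! i = x"
  by (simp add: insert_at_def nth_append)

lemma nth_del_lt: "p < q \<Longrightarrow> q < length v \<Longrightarrow> (del q v) ! p = v ! p"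
  by (simp add: del_def nth_append)

lemma nth_del_ge: "q \<le> p \<Longrightarrow> Suc p < length v \<Longrightarrow> (del q v) ! p = v ! Suc p"
  by (simp add: del_def nth_append min_def)

lemma nths_cong_len: "(\<And>i. i < length xs \<Longrightarrow> i \<in> A \<longleftrightarrow> i \<in> B) \<Longrightarrow> nths xs A = nths xs B"
proof (induction xs arbitrary: A B)
  case Nil then show ?case by simp
next
  case (Cons x xs)
  have "nths xs {j. Suc j \<in> A} = nths xs {j. Suc j \<in> B}"
    by (rule Cons.IH) (use Cons.prems in auto)
  moreover have "0 \<in> A \<longleftrightarrow> 0 \<in> B" using Cons.prems by auto
  ultimately show ?case by (simp add: nths_Cons)
qed

lemma nths_del1: "q < length v \<Longrightarrow> nths v (-{q}) = del q v"
proof (induction v arbitrary: q)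
  case Nil then show ?case by simp
next
  case (Cons x xs)
  show ?case
  proof (cases q)
    case 0
    have "nths xs {j. Suc j \<in> - {q}} = xs" using 0 by (intro nths_all) auto
    then show ?thesis using 0 by (simp add: nths_Cons del_def)
  next
    case (Suc q')
    have "{j. Suc j \<in> - {q}} = -{q'}" using Suc by auto
    then show ?thesis using Suc Cons by (simp add: nths_Cons del_def)
  qed
qed

lemma nths_del2: "p < q \<Longrightarrow> q < length v \<Longrightarrow> nths v (-{p,q}) = del p (del q v) \<and> nths v (-{p,q}) = del (q-1) (del p v)"
proof (induction v arbitrary: p q)
  case Nil then show ?case by simp
next
  case (Cons x xs)
  show ?case
  proof (cases p)
    case 0
    then obtain q' where q: "q = Suc q'" using Cons by (cases q) auto
    have "{j. Suc j \<in> - {p,q}} = -{q'}" using 0 q by auto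
    then have "nths (x#xs) (-{p,q}) = del q' xs" using 0 q Cons.prems by (simp add: nths_Cons nths_del1)
    then show ?thesis using 0 q Cons.prems by (simp add: del_def)
  next
    case (Suc p')
    then obtain q' where q: "q = Suc q'" using Cons by (cases q) auto
    have "{j. Suc j \<in> - {p,q}} = -{p',q'}" using Suc q by auto
    then have "nths (x#xs) (-{p,q}) = x # nths xs (-{p',q'})" using Suc q by (simp add: nths_Cons)
    moreover have ih: "nths xs (-{p',q'}) = del p' (del q' xs) \<and> nths xs (-{p',q'}) = del (q'-1) (del p' xs)"
      using Cons.IH[of p' q'] Cons.prems Suc q by (metis Suc_less_eq length_Cons)
    moreover have "q' - 1 = q - 1 - 1" "Suc (q - 1 - 1) = q - 1" using q Suc Cons.prems by auto
    moreover have "del p' (del q' xs) = del (q'-1) (del p' xs)"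
      using ih by metis
    ultimately show ?thesis using Suc q Cons.prems by (cases q') auto
  qed
qed

definition adj :: "nat \<Rightarrow> nat \<Rightarrow> nat" where "adj p q = (if q < p then p - 1 else p)"

lemma rem_del: "p \<noteq> q \<Longrightarrow> p < length v \<Longrightarrow> q < length v \<Longrightarrow>
   nths v (-{p,q}) = del (adj p q) (del q v) \<and> (del q v) ! (adj p q) = v ! p \<and> adj p q < length (del q v)"
proof (cases "p < q")
  case True
  assume "p < length v" "q < length v"
  then show ?thesis using True nths_del2[of p q v] nth_del_lt[of p q v] by (simp add: adj_def)
next
  case False
  assume "p \<noteq> q" "p < length v" "q < length v"
  then have "q < p" using False by simp
  have "{p,q} = {q,p}" by auto
  moreover have "nths v (-{q,p}) = del q (del p v)" "nths v (-{q,p}) = del (p-1) (del q v)"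
    using \<open>q < p\<close> \<open>p < length v\<close> nths_del2[of q p v] by auto
  ultimately show ?thesis using \<open>q < p\<close> \<open>p < length v\<close> nth_del_ge[of q "p-1" v] by (simp add: adj_def)
qed

definition Ncount :: "word \<Rightarrow> word \<Rightarrow> nat" where
  "Ncount u v = card {(i,j). i \<le> length u \<and> j \<le> Suc (length u) \<and> insert_at j Lb (insert_at i La u) = v}"

definition R :: "word \<Rightarrow> word \<Rightarrow> (nat \<times> nat) set" where
  "R u v = {(p,q). p < length v \<and> q < length v \<and> v!p = La \<and> v!q = Lb \<and> nths v (-{p,q}) = u}"

lemma fwd:
  assumes i: "i \<le> length u" and j: "j \<le> Suc (length u)" and v: "insert_at j Lb (insert_at i La u) = v"
  defines "p \<equiv> (if j \<le> i then Suc i else i)"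
  shows "(p, j) \<in> R u v" "adj p j = i"
proof -
  let ?w = "insert_at i La u"
  have lw: "length ?w = Suc (length u)" using i by simp
  have lv: "length v = Suc (Suc (length u))" using v j lw by (auto simp: insert_at_def)
  have dj: "del j v = ?w" using v del_insert[of j ?w Lb] j lw by simp
  have vj: "v ! j = Lb" using v nth_insert_at[of j ?w Lb] j lw by simp
  show ap: "adj p j = i" by (simp add: p_def adj_def)
  have pj: "p \<noteq> j" "p < length v" "j < length v" using lv i j by (auto simp: p_def)
  note rd = rem_del[OF pj]
  have "v ! p = La" using rd ap dj nth_insert_at[of i u La] i by simp
  moreover have "nths v (-{p,j}) = u" using rd ap dj del_insert[OF i] by simp
  ultimately show "(p, j) \<in> R u v" using vj pj by (simp add: R_def)
qed

lemma bwd: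
  assumes "(p,q) \<in> R u v" and lv: "length v = Suc (Suc (length u))"
  shows "adj p q \<le> length u" "q \<le> Suc (length u)"
    "insert_at q Lb (insert_at (adj p q) La u) = v"
    "(if q \<le> adj p q then Suc (adj p q) else adj p q) = p"
proof -
  have h: "p < length v" "q < length v" "v!p = La" "v!q = Lb" "nths v (-{p,q}) = u"
    using assms(1) by (auto simp: R_def)
  have pq: "p \<noteq> q" using h(3,4) by auto
  have rd: "nths v (-{p,q}) = del (adj p q) (del q v)" "(del q v) ! (adj p q) = v ! p" "adj p q < length (del q v)"
    using rem_del[OF pq h(1,2)] by auto
  have r1: "u = del (adj p q) (del q v)" using rd(1) h(5) by simp
  have r2: "(del q v) ! (adj p q) = La" using rd(2) h(3) by simp
  have ld: "length (del q v) = Suc (length u)" using h(2) lv by simp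
  show "adj p q \<le> length u" using rd(3) ld by simp
  show "q \<le> Suc (length u)" using h(2) lv by simp
  have "insert_at (adj p q) ((del q v) ! (adj p q)) (del (adj p q) (del q v)) = del q v"
    by (rule insert_del) (rule rd(3))
  then have "insert_at (adj p q) La u = del q v" by (simp only: r2 r1[symmetric])
  moreover have "insert_at q (v!q) (del q v) = v" by (rule insert_del) (rule h(2))
  ultimately show "insert_at q Lb (insert_at (adj p q) La u) = v" using h(4) by simp
  show "(if q \<le> adj p q then Suc (adj p q) else adj p q) = p"
    using pq by (auto simp: adj_def)
qed

lemma Ncount_R:
  assumes lv: "length v = Suc (Suc (length u))"
  shows "Ncount u v = card (R u v)"
proof -
  let ?A = "{(i,j). i \<le> length u \<and> j \<le> Suc (length u) \<and> insert_at j Lb (insert_at i La u) = v}"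
  let ?f = "\<lambda>(i,j). ((if j \<le> i then Suc i else i), j)"
  let ?g = "\<lambda>(p,q). (adj p q, q)"
  have "bij_betw ?f ?A (R u v)"
  proof (rule bij_betw_byWitness[where f'="?g"])
    show "\<forall>a\<in>?A. ?g (?f a) = a"
    proof
      fix a assume "a \<in> ?A"
      then obtain i j where a: "a = (i,j)" "i \<le> length u" "j \<le> Suc (length u)" "insert_at j Lb (insert_at i La u) = v"
        by blast
      show "?g (?f a) = a" using fwd(2)[OF a(2-4)] a(1) by simp
    qed
    show "\<forall>a\<in>R u v. ?f (?g a) = a"
    proof
      fix a assume "a \<in> R u v"
      then obtain p q where a: "a = (p,q)" "(p,q) \<in> R u v" by (cases a) blast
      show "?f (?g a) = a" using bwd(4)[OF a(2) lv] a(1) by simp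
    qed
    show "?f ` ?A \<subseteq> R u v"
    proof
      fix b assume "b \<in> ?f ` ?A"
      then obtain i j where b: "b = ?f (i,j)" "i \<le> length u" "j \<le> Suc (length u)" "insert_at j Lb (insert_at i La u) = v"
        by blast
      show "b \<in> R u v" using fwd(1)[OF b(2-4)] b(1) by simp
    qed
    show "?g ` R u v \<subseteq> ?A"
    proof
      fix b assume "b \<in> ?g ` R u v"
      then obtain x where x: "b = ?g x" "x \<in> R u v" by blast
      obtain p q where "x = (p,q)" by (cases x)
      then have b: "b = ?g (p,q)" "(p,q) \<in> R u v" using x by auto
      show "b \<in> ?A" using bwd(1-3)[OF b(2) lv] b(1) by simp
    qed
  qed
  then show ?thesis unfolding Ncount_def by (rule bij_betw_same_card)
qed

lemma length_count: "length xs = count_list xs La + count_list xs Lb"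
proof (induction xs)
  case (Cons a xs) then show ?case by (cases a) auto
qed simp

lemma letter_UNIV: "(UNIV :: letter set) = {La, Lb}"
  using letter.exhaust by auto

lemma finite_W: "finite (W m)"
proof -
  have "W m \<subseteq> {xs. set xs \<subseteq> UNIV \<and> length xs = 2*m}"
    by (auto simp: W_def length_count)
  moreover have "finite {xs. set xs \<subseteq> (UNIV::letter set) \<and> length xs = 2*m}"
    by (rule finite_lists_length_eq) (simp add: letter_UNIV)
  ultimately show ?thesis by (rule finite_subset)
qed

lemma length_W: "u \<in> W m \<Longrightarrow> length u = 2*m"
  by (simp add: W_def length_count)

lemma count_rem: "p \<noteq> q \<Longrightarrow> p < length (v::word) \<Longrightarrow> q < length v \<Longrightarrow>
  count_list v x = count_list (nths v (-{p,q})) x + (if v!p = x then 1 else 0) + (if v!q = x then 1 else 0)"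
proof -
  assume a: "p \<noteq> q" "p < length v" "q < length v"
  note rd = rem_del[OF a]
  have "count_list v x = count_list (del q v) x + (if v!q = x then 1 else 0)"
    using count_del a by blast
  also have "count_list (del q v) x = count_list (nths v (-{p,q})) x + (if v!p = x then 1 else 0)"
    using count_del[of "adj p q" "del q v" x] rd by simp
  finally show ?thesis by simp
qed

lemma rem_W: "v \<in> W (Suc m) \<Longrightarrow> p < length v \<Longrightarrow> q < length v \<Longrightarrow> v!p = La \<Longrightarrow> v!q = Lb \<Longrightarrow> nths v (-{p,q}) \<in> W m"
proof -
  assume a: "v \<in> W (Suc m)" "p < length v" "q < length v" "v!p = La" "v!q = Lb"
  then have pq: "p \<noteq> q" by auto
  show ?thesis using count_rem[OF pq a(2,3), of La] count_rem[OF pq a(2,3), of Lb] a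
    by (simp add: W_def)
qed

lemma count_card: "count_list xs y = card {i. i < length xs \<and> xs ! i = y}"
  by (simp add: count_list_eq_length_filter length_filter_conv_card eq_commute)

lemma sum_R:
  assumes v: "v \<in> W (Suc m)"
  shows "(\<Sum>u\<in>W m. card (R u v)) = (Suc m)^2"
proof -
  let ?n = "length v"
  let ?P = "{(p,q). p < ?n \<and> q < ?n \<and> v!p = La \<and> v!q = Lb}"
  have fin: "finite (R u v)" for u
    by (rule finite_subset[of _ "{..<?n} \<times> {..<?n}"]) (auto simp: R_def)
  have "?P = (\<Union>u\<in>W m. R u v)"
  proof
    show "?P \<subseteq> (\<Union>u\<in>W m. R u v)"
    proof
      fix x assume "x \<in> ?P"
      then obtain p q where x: "x = (p,q)" "p < ?n" "q < ?n" "v!p = La" "v!q = Lb" by blast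
      then have "nths v (-{p,q}) \<in> W m" using rem_W[OF v] by blast
      moreover have "x \<in> R (nths v (-{p,q})) v" using x by (simp add: R_def)
      ultimately show "x \<in> (\<Union>u\<in>W m. R u v)" by blast
    qed
    show "(\<Union>u\<in>W m. R u v) \<subseteq> ?P" by (auto simp: R_def)
  qed
  then have "card ?P = card (\<Union>u\<in>W m. R u v)" by simp
  also have "\<dots> = (\<Sum>u\<in>W m. card (R u v))"
    apply (rule card_UN_disjoint)
      apply (rule finite_W)
     apply (simp add: fin)
    apply (auto simp: R_def)
    done
  finally have 1: "(\<Sum>u\<in>W m. card (R u v)) = card ?P" by simp
  have "?P = {p. p < ?n \<and> v!p = La} \<times> {q. q < ?n \<and> v!q = Lb}" by auto
  then have "card ?P = count_list v La * count_list v Lb"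
    by (simp add: count_card card_cartesian_product)
  then show ?thesis using 1 v by (simp add: W_def power2_eq_square)
qed


lemma inj_h: "inj_on (\<lambda>(p,q). {0..<length v} - {p,q}) (R u v)"
proof (rule inj_onI)
  let ?n = "length v"
  let ?h = "\<lambda>(p,q). {0..<?n} - {p,q}"
  fix x y assume x: "x \<in> R u v" and y: "y \<in> R u v" and e: "?h x = ?h y"
  obtain p q where xx: "x = (p,q)" "p < ?n" "q < ?n" "v!p = La" "v!q = Lb" using x unfolding R_def by blast
  obtain p' q' where yy: "y = (p',q')" "p' < ?n" "q' < ?n" "v!p' = La" "v!q' = Lb" using y unfolding R_def by blast
  have e': "{0..<?n} - {p,q} = {0..<?n} - {p',q'}" using e unfolding xx(1) yy(1) by simp
  have s1: "{p,q} = {0..<?n} - ({0..<?n} - {p,q})" using xx(2,3) by auto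
  have s2: "{p',q'} = {0..<?n} - ({0..<?n} - {p',q'})" using yy(2,3) by auto
  have pq: "{p,q} = {p',q'}" using s1 s2 e' by simp
  have "p \<in> {p',q'}" "q \<in> {p',q'}" using pq by blast+
  then have "p = p' \<and> q = q'" using xx(4,5) yy(4,5) by auto
  then show "x = y" using xx yy by simp
qed

lemma subword_R:
  assumes u: "u \<in> W m" and v: "v \<in> W (Suc m)"
  shows "subword_count v u = card (R u v)"
proof -
  let ?n = "length v"
  let ?S = "{I. I \<subseteq> {0..<?n} \<and> card I = length u \<and> nths v I = u}"
  let ?h = "\<lambda>(p,q). {0..<?n} - {p,q}"
  have lu: "length u = 2*m" and lv: "?n = 2*m + 2" using length_W u v by auto
  have hset: "{0..<?n} - ?h (p,q) = {p,q}" if "p < ?n" "q < ?n" for p q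
    using that by auto
  have inj: "inj_on ?h (R u v)" by (rule inj_h)
  have img: "?h ` R u v = ?S"
  proof
    show "?h ` R u v \<subseteq> ?S"
    proof
      fix I assume "I \<in> ?h ` R u v"
      then obtain x where x: "x \<in> R u v" "I = ?h x" by (rule imageE) blast
      obtain p q where pqx: "x = (p,q)" by (cases x)
      have I1: "I = {0..<?n} - {p,q}" using x(2) pqx by simp
      have h: "p < ?n" "q < ?n" "v!p = La" "v!q = Lb" "nths v (-{p,q}) = u"
        using x(1) unfolding pqx R_def by blast+
      have pq: "p \<noteq> q" using h(3,4) by auto
      have c2: "card {p,q} = 2" using pq by simp
      have sub: "{p,q} \<subseteq> {0..<?n}" using h(1,2) by auto
      have "card I = card {0..<?n} - card {p,q}" unfolding I1 by (rule card_Diff_subset) (simp, rule sub)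
      then have cI: "card I = length u" using c2 lu lv by simp
      have "nths v I = nths v (-{p,q})" by (rule nths_cong_len) (simp add: I1)
      then have nI: "nths v I = u" using h(5) by simp
      have "I \<subseteq> {0..<?n}" unfolding I1 by blast
      then show "I \<in> ?S" using cI nI by blast
    qed
    show "?S \<subseteq> ?h ` R u v"
    proof
      fix I assume I: "I \<in> ?S"
      let ?J = "{0..<?n} - I"
      have Isub0: "I \<subseteq> {0..<?n}" using I by blast
      have finI: "finite I" using Isub0 finite_subset by blast
      have "card ?J = card {0..<?n} - card I" using card_Diff_subset[OF finI Isub0] .
      then have "card ?J = 2" using I lu lv by simp
      then obtain a b where ab: "?J = {a,b}" "a \<noteq> b" by (meson card_2_iff)
      have "a \<in> ?J" "b \<in> ?J" using ab(1) by blast+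
      then have abn: "a < ?n" "b < ?n" by auto
      have Isub: "I \<subseteq> {0..<?n}" using I by blast
      have IJ: "I = {0..<?n} - {a,b}" using Isub ab(1) by blast
      have "nths v (-{a,b}) = nths v I" by (rule nths_cong_len) (use IJ in auto)
      then have nu: "nths v (-{a,b}) = u" using I by simp
      have cA: "count_list v La = count_list u La + (if v!a = La then 1 else 0) + (if v!b = La then 1 else 0)"
        using count_rem[OF ab(2) abn, of La] nu by simp
      have cB: "count_list v Lb = count_list u Lb + (if v!a = Lb then 1 else 0) + (if v!b = Lb then 1 else 0)"
        using count_rem[OF ab(2) abn, of Lb] nu by simp
      have cu: "count_list u La = m" "count_list u Lb = m" "count_list v La = Suc m" "count_list v Lb = Suc m"
        using u v by (auto simp: W_def)
      show "I \<in> ?h ` R u v"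
      proof (cases "v!a")
        case La
        then have "v!b = Lb" using cA cu by (cases "v!b") auto
        then have "(a,b) \<in> R u v" using La abn nu by (simp add: R_def)
        moreover have "I = ?h (a,b)" using IJ by simp
        ultimately show ?thesis by blast
      next
        case Lb
        then have "v!b = La" using cB cu by (cases "v!b") auto
        moreover have "nths v (-{b,a}) = u" using nu by (simp add: insert_commute)
        ultimately have "(b,a) \<in> R u v" using Lb abn by (simp add: R_def)
        moreover have "I = ?h (b,a)" using IJ by (simp add: insert_commute)
        ultimately show ?thesis by blast
      qed
    qed
  qed
  have "subword_count v u = card ?S" by (simp add: subword_count_def)
  also have "\<dots> = card (?h ` R u v)" using img by simp
  also have "\<dots> = card (R u v)" using inj by (rule card_image)
  finally show ?thesis .
qed

lemma card_if_sum: "finite A \<Longrightarrow> (\<Sum>j\<in>A. if P j then (1::real) else 0) = real (card {j\<in>A. P j})"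
  by (simp add: sum.inter_filter[symmetric])

lemma pmf_step: "pmf (step_pmf u) v = real (Ncount u v) / (real (Suc (length u)) * real (Suc (Suc (length u))))"
proof -
  let ?n = "length u"
  let ?B = "\<lambda>i. {j\<in>{0..Suc ?n}. insert_at j Lb (insert_at i La u) = v}"
  have inner: "pmf (pmf_of_set {0..length (insert_at i La u)} \<bind> (\<lambda>j. return_pmf (insert_at j Lb (insert_at i La u)))) v
      = real (card (?B i)) / real (Suc (Suc ?n))" if i: "i \<in> {0..?n}" for i
  proof -
    have l: "length (insert_at i La u) = Suc ?n" using i by simp
    have "pmf (pmf_of_set {0..length (insert_at i La u)} \<bind> (\<lambda>j. return_pmf (insert_at j Lb (insert_at i La u)))) v
      = (\<Sum>j\<in>{0..Suc ?n}. pmf (return_pmf (insert_at j Lb (insert_at i La u))) v) / real (card {0..Suc ?n})"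
      unfolding l by (rule pmf_bind_pmf_of_set) auto
    also have "(\<Sum>j\<in>{0..Suc ?n}. pmf (return_pmf (insert_at j Lb (insert_at i La u))) v)
       = (\<Sum>j\<in>{0..Suc ?n}. if insert_at j Lb (insert_at i La u) = v then 1 else 0)"
      by (rule sum.cong) (auto simp: indicator_def)
    also have "\<dots> = real (card (?B i))" by (rule card_if_sum) simp
    finally show ?thesis by simp
  qed
  have "pmf (step_pmf u) v = (\<Sum>i\<in>{0..?n}. pmf (pmf_of_set {0..length (insert_at i La u)} \<bind> (\<lambda>j. return_pmf (insert_at j Lb (insert_at i La u)))) v) / real (card {0..?n})"
    unfolding step_pmf_def Let_def by (rule pmf_bind_pmf_of_set) auto
  also have "(\<Sum>i\<in>{0..?n}. pmf (pmf_of_set {0..length (insert_at i La u)} \<bind> (\<lambda>j. return_pmf (insert_at j Lb (insert_at i La u)))) v)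
     = (\<Sum>i\<in>{0..?n}. real (card (?B i)) / real (Suc (Suc ?n)))"
    by (rule sum.cong[OF refl], rule inner)
  also have "\<dots> = real (\<Sum>i\<in>{0..?n}. card (?B i)) / real (Suc (Suc ?n))"
    by (simp add: sum_divide_distrib)
  also have "(\<Sum>i\<in>{0..?n}. card (?B i)) = card (SIGMA i:{0..?n}. ?B i)"
    by (rule card_SigmaI[symmetric]) auto
  also have "(SIGMA i:{0..?n}. ?B i) = {(i,j). i \<le> ?n \<and> j \<le> Suc ?n \<and> insert_at j Lb (insert_at i La u) = v}"
    by auto
  finally show ?thesis unfolding Ncount_def by (simp add: field_simps)
qed

lemma path_len: "p \<in> set_pmf (path_pmf n) \<Longrightarrow> length p = Suc n"
  by (induction n arbitrary: p) auto

definition Mg :: "nat \<Rightarrow> word pmf" where "Mg n = map_pmf last (path_pmf n)"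

lemma Mg_Suc: "Mg (Suc n) = Mg n \<bind> step_pmf"
  unfolding Mg_def by (simp add: map_bind_pmf bind_map_pmf map_pmf_comp o_def)

fun cc :: "nat \<Rightarrow> real" where
  "cc 0 = 1"
| "cc (Suc n) = cc n * (real (Suc n))^2 / (real (2*n+1) * real (2*n+2))"

lemma cc_pos: "cc n > 0"
  by (induction n) auto

lemma W0: "x \<in> W 0 \<longleftrightarrow> x = []"
  using length_count[of x] by (auto simp: W_def)

lemma insert_W: "u \<in> W n \<Longrightarrow> i \<le> length u \<Longrightarrow> j \<le> Suc (length u) \<Longrightarrow> insert_at j Lb (insert_at i La u) \<in> W (Suc n)"
  by (simp add: W_def count_insert_at)

lemma Mg_pmf: "pmf (Mg n) x = (if x \<in> W n then cc n else 0)"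
proof (induction n arbitrary: x)
  case 0
  show ?case by (simp add: Mg_def W0 indicator_def)
next
  case (Suc n)
  have sub: "a \<in> W n" if "a \<in> set_pmf (Mg n)" for a
    using that Suc.IH[of a] by (auto simp: set_pmf_iff split: if_splits)
  have "pmf (Mg (Suc n)) x = (\<integral>u. pmf (step_pmf u) x \<partial>measure_pmf (Mg n))"
    by (simp add: Mg_Suc pmf_bind)
  also have "\<dots> = (\<Sum>u\<in>W n. pmf (step_pmf u) x * pmf (Mg n) u)"
    by (rule integral_measure_pmf_real) (auto simp: finite_W sub)
  also have "\<dots> = (\<Sum>u\<in>W n. real (Ncount u x) / (real (2*n+1) * real (2*n+2)) * cc n)"
    by (rule sum.cong) (simp_all add: Suc.IH pmf_step length_W)
  also have "\<dots> = (\<Sum>u\<in>W n. real (Ncount u x)) * (cc n / (real (2*n+1) * real (2*n+2)))"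
    by (simp only: sum_distrib_right) (rule sum.cong, simp_all)
  finally have e: "pmf (Mg (Suc n)) x = (\<Sum>u\<in>W n. real (Ncount u x)) * (cc n / (real (2*n+1) * real (2*n+2)))" .
  show ?case
  proof (cases "x \<in> W (Suc n)")
    case True
    have "(\<Sum>u\<in>W n. real (Ncount u x)) = (\<Sum>u\<in>W n. real (card (R u x)))"
    proof (rule sum.cong[OF refl])
      fix u assume "u \<in> W n"
      then show "real (Ncount u x) = real (card (R u x))"
        using Ncount_R[of x u] length_W[of u n] length_W[OF True] by simp
    qed
    also have "\<dots> = real (\<Sum>u\<in>W n. card (R u x))" by simp
    also have "\<dots> = (real (Suc n))^2" using sum_R[OF True] by simp
    finally show ?thesis using e True by simp
  next
    case False
    have "Ncount u x = 0" if "u \<in> W n" for u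
    proof -
      have "{(i,j). i \<le> length u \<and> j \<le> Suc (length u) \<and> insert_at j Lb (insert_at i La u) = x} = {}"
        using insert_W[OF that] False by blast
      then show ?thesis unfolding Ncount_def by (simp only: card.empty)
    qed
    then show ?thesis using e False by simp
  qed
qed

lemma prob_bind: "measure_pmf.prob (bind_pmf M f) A = (\<integral>x. measure_pmf.prob (f x) A \<partial>measure_pmf M)"
  unfolding measure_pmf_bind
  by (rule measure_pmf.measure_bind[where N="count_space UNIV"]) (auto simp: measure_pmf_in_subprob_algebra)

lemma integral_ind_const: "(\<integral>x. indicator S x * (c::real) \<partial>measure_pmf M) = measure_pmf.prob M S * c"
  by simp

lemma measure_cond:
  assumes "measure_pmf.prob P A > 0"
  shows "measure_pmf.prob (cond_pmf P A) B = measure_pmf.prob P (A \<inter> B) / measure_pmf.prob P A"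
proof -
  have ne: "set_pmf P \<inter> A \<noteq> {}" using assms measure_pmf_zero_iff[of P A] by auto
  have "measure_pmf (cond_pmf P A) = uniform_measure (measure_pmf P) A" by (rule cond_pmf.rep_eq[OF ne])
  then show ?thesis using assms by (simp add: measure_pmf.emeasure_eq_measure)
qed

fun ext :: "nat \<Rightarrow> word \<Rightarrow> word list pmf" where
  "ext 0 x = return_pmf []"
| "ext (Suc j) x = ext j x \<bind> (\<lambda>q. map_pmf (\<lambda>y. q @ [y]) (step_pmf (last (x # q))))"

lemma path_split: "path_pmf (n + j) = path_pmf n \<bind> (\<lambda>p. map_pmf (\<lambda>q. p @ q) (ext j (last p)))"
proof (induction j)
  case 0
  show ?case by (simp add: bind_return_pmf')
next
  case (Suc j)
  have "path_pmf (n + Suc j) = path_pmf (n + j) \<bind> (\<lambda>p. map_pmf (\<lambda>v. p @ [v]) (step_pmf (last p)))"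
    by simp
  also have "\<dots> = path_pmf n \<bind> (\<lambda>p. ext j (last p) \<bind> (\<lambda>q. map_pmf (\<lambda>y. p @ q @ [y]) (step_pmf (last (p @ q)))))"
    unfolding Suc.IH by (simp add: bind_assoc_pmf bind_map_pmf)
  also have "\<dots> = path_pmf n \<bind> (\<lambda>p. ext j (last p) \<bind> (\<lambda>q. map_pmf (\<lambda>y. p @ q @ [y]) (step_pmf (last (last p # q)))))"
  proof (rule bind_pmf_cong[OF refl])
    fix p assume "p \<in> set_pmf (path_pmf n)"
    then have "p \<noteq> []" using path_len[of p n] by auto
    then have "last (p @ q) = last (last p # q)" for q by (cases q) auto
    then show "ext j (last p) \<bind> (\<lambda>q. map_pmf (\<lambda>y. p @ q @ [y]) (step_pmf (last (p @ q)))) =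
          ext j (last p) \<bind> (\<lambda>q. map_pmf (\<lambda>y. p @ q @ [y]) (step_pmf (last (last p # q))))"
      by simp
  qed
  also have "\<dots> = path_pmf n \<bind> (\<lambda>p. map_pmf (\<lambda>q. p @ q) (ext (Suc j) (last p)))"
    by (simp add: map_bind_pmf map_pmf_comp o_def)
  finally show ?case .
qed

lemma last_len: "length p = Suc n \<Longrightarrow> last p = p ! n"
proof -
  assume l: "length p = Suc n"
  then have "p \<noteq> []" by auto
  then show ?thesis using last_conv_nth[of p] l by simp
qed

lemma nth_split: "length pre = Suc (Suc m) \<Longrightarrow> (pre @ q) ! (Suc m + j) = (last pre # q) ! j"
proof -
  assume l: "length pre = Suc (Suc m)"
  then have ne: "pre \<noteq> []" by auto
  have lp: "last pre = pre ! Suc m" using last_conv_nth[OF ne] l by simp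
  show ?thesis using l lp by (cases j) (auto simp: nth_append)
qed

lemma markov:
  assumes mk: "m < k"
  shows "measure_pmf.prob (path_pmf k) {p. p!k = w \<and> \<psi> (p!m) \<and> p!Suc m = v}
    = measure_pmf.prob (ext (k - Suc m) v) {q. (v#q) ! (k - Suc m) = w}
      * measure_pmf.prob (path_pmf (Suc m)) {p. \<psi> (p!m) \<and> last p = v}"
proof -
  define j where "j = k - Suc m"
  have kj: "k = Suc m + j" using mk by (simp add: j_def)
  let ?Q = "path_pmf (Suc m)"
  let ?E = "{p. p!k = w \<and> \<psi> (p!m) \<and> p!Suc m = v}"
  let ?S = "{p. \<psi> (p!m) \<and> last p = v}"
  let ?G = "measure_pmf.prob (ext j v) {q. (v#q) ! j = w}"
  have "measure_pmf.prob (path_pmf k) ?E = measure_pmf.prob (?Q \<bind> (\<lambda>p. map_pmf (\<lambda>q. p @ q) (ext j (last p)))) ?E"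
    unfolding kj path_split ..
  also have "\<dots> = (\<integral>pre. measure_pmf.prob (map_pmf (\<lambda>q. pre @ q) (ext j (last pre))) ?E \<partial>measure_pmf ?Q)"
    by (rule prob_bind)
  also have "\<dots> = (\<integral>pre. indicator ?S pre * ?G \<partial>measure_pmf ?Q)"
  proof (intro integral_cong_AE)
    show "AE pre in measure_pmf ?Q. measure_pmf.prob (map_pmf (\<lambda>q. pre @ q) (ext j (last pre))) ?E = indicator ?S pre * ?G"
    proof (rule AE_pmfI)
      fix pre assume "pre \<in> set_pmf ?Q"
      then have l: "length pre = Suc (Suc m)" by (rule path_len)
      have n1: "(pre @ q) ! m = pre ! m" for q using l by (simp add: nth_append)
      have n2: "(pre @ q) ! Suc m = last pre" for q using l last_len[OF l] by (simp add: nth_append)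
      have n3: "(pre @ q) ! k = (last pre # q) ! j" for q using nth_split[OF l] kj by simp
      have pre: "(\<lambda>q. pre @ q) -` ?E = (if pre \<in> ?S then {q. (v#q) ! j = w} else {})"
        using n1 n2 n3 by (auto simp: l last_conv_nth)
      show "measure_pmf.prob (map_pmf (\<lambda>q. pre @ q) (ext j (last pre))) ?E = indicator ?S pre * ?G"
        using pre by (auto simp: indicator_def)
    qed
  qed simp_all
  also have "\<dots> = measure_pmf.prob ?Q ?S * ?G" by (rule integral_ind_const)
  finally show ?thesis by (simp add: j_def mult.commute)
qed

lemma back_step:
  "measure_pmf.prob (path_pmf (Suc m)) {p. p!m = u \<and> last p = v} = pmf (step_pmf u) v * pmf (Mg m) u"
proof -
  let ?S = "{p. p!m = u \<and> last p = v}"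
  have "measure_pmf.prob (path_pmf (Suc m)) ?S
     = (\<integral>p. measure_pmf.prob (map_pmf (\<lambda>y. p @ [y]) (step_pmf (last p))) ?S \<partial>measure_pmf (path_pmf m))"
    by (simp only: path_pmf.simps prob_bind)
  also have "\<dots> = (\<integral>p. indicator {p. last p = u} p * pmf (step_pmf u) v \<partial>measure_pmf (path_pmf m))"
  proof (intro integral_cong_AE)
    show "AE p in measure_pmf (path_pmf m). measure_pmf.prob (map_pmf (\<lambda>y. p @ [y]) (step_pmf (last p))) ?S
        = indicator {p. last p = u} p * pmf (step_pmf u) v"
    proof (rule AE_pmfI)
      fix p assume "p \<in> set_pmf (path_pmf m)"
      then have l: "length p = Suc m" by (rule path_len)
      have "(\<lambda>y. p @ [y]) -` ?S = (if last p = u then {v} else {})"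
        using l last_len[OF l] by (auto simp: nth_append)
      then show "measure_pmf.prob (map_pmf (\<lambda>y. p @ [y]) (step_pmf (last p))) ?S
        = indicator {p. last p = u} p * pmf (step_pmf u) v"
        by (auto simp: indicator_def measure_pmf_single)
    qed
  qed simp_all
  also have "\<dots> = measure_pmf.prob (path_pmf m) {p. last p = u} * pmf (step_pmf u) v"
    by (rule integral_ind_const)
  also have "measure_pmf.prob (path_pmf m) {p. last p = u} = pmf (Mg m) u"
    unfolding Mg_def pmf_map by (simp add: vimage_def)
  finally show ?thesis by simp
qed

lemma last_prob: "measure_pmf.prob (path_pmf n) {p. True \<and> last p = v} = pmf (Mg n) v"
  unfolding Mg_def pmf_map by (simp add: vimage_def)

lemma pos_helper: "0 < x * c / a \<Longrightarrow> 0 < c \<Longrightarrow> 0 < a \<Longrightarrow> 0 < (x::real)"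
  by (simp add: zero_less_divide_iff zero_less_mult_iff)

lemma ratio_helper: "0 < G \<Longrightarrow> 0 < a \<Longrightarrow> (G * x / a) / (G * y / a) = x / (y::real)"
  by (simp add: field_simps)

lemma final_helper: "0 < D \<Longrightarrow> 0 < c \<Longrightarrow> 0 < s \<Longrightarrow> (N / D) * c / (c * s / D) = N / (s::real)"
  by (simp add: field_simps)

theorem mainTheorem3:
  fixes k m :: nat and w u v :: word
  assumes "w \<in> W k"
    and "m < k"
    and "v \<in> W (Suc m)"
    and "measure_pmf.prob (path_pmf k) {p. p ! k = w} > 0"
    and "measure_pmf.prob (bridge_pmf k w) {p. p ! Suc m = v} > 0"
    and "u \<in> W m"
  shows "bridge_back_prob k w m u v = real (subword_count v u) / (real (m + 1))^2"
proof -
  let ?P = "path_pmf k"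
  let ?A = "{p. p ! k = w}"
  define a where "a = measure_pmf.prob ?P ?A"
  define G where "G = measure_pmf.prob (ext (k - Suc m) v) {q. (v#q) ! (k - Suc m) = w}"
  define T where "T = pmf (step_pmf u) v"
  have pA: "measure_pmf.prob ?P ?A > 0" using assms(4) .
  have s1: "?A \<inter> {p. p!m = u \<and> p!Suc m = v} = {p. p!k = w \<and> (\<lambda>a. a = u) (p!m) \<and> p!Suc m = v}" by auto
  have s2: "?A \<inter> {p. p!Suc m = v} = {p. p!k = w \<and> (\<lambda>a. True) (p!m) \<and> p!Suc m = v}" by auto
  have num: "measure_pmf.prob ?P {p. p!k = w \<and> (\<lambda>a. a = u) (p!m) \<and> p!Suc m = v} = G * (T * cc m)"
  proof -
    have "measure_pmf.prob ?P {p. p!k = w \<and> (\<lambda>a. a = u) (p!m) \<and> p!Suc m = v}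
       = G * measure_pmf.prob (path_pmf (Suc m)) {p. p!m = u \<and> last p = v}"
      using markov[OF assms(2), of w "\<lambda>a. a = u" v] unfolding G_def by (simp del: path_pmf.simps)
    also have "\<dots> = G * (T * cc m)"
      using back_step[of m u v] Mg_pmf[of m u] assms(6) unfolding T_def by (simp del: path_pmf.simps)
    finally show ?thesis .
  qed
  have den: "measure_pmf.prob ?P {p. p!k = w \<and> (\<lambda>a. True) (p!m) \<and> p!Suc m = v} = G * cc (Suc m)"
  proof -
    have "measure_pmf.prob ?P {p. p!k = w \<and> (\<lambda>a. True) (p!m) \<and> p!Suc m = v}
       = G * measure_pmf.prob (path_pmf (Suc m)) {p. True \<and> last p = v}"
      using markov[OF assms(2), of w "\<lambda>a. True" v] unfolding G_def by (simp del: path_pmf.simps)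
    also have "\<dots> = G * cc (Suc m)"
      using last_prob[of "Suc m" v] Mg_pmf[of "Suc m" v] assms(3) by (simp del: path_pmf.simps)
    finally show ?thesis .
  qed
  have b1: "measure_pmf.prob (bridge_pmf k w) {p. p!m = u \<and> p!Suc m = v} = G * (T * cc m) / a"
    unfolding bridge_pmf_def measure_cond[OF pA] s1 num a_def ..
  have b2: "measure_pmf.prob (bridge_pmf k w) {p. p!Suc m = v} = G * cc (Suc m) / a"
    unfolding bridge_pmf_def measure_cond[OF pA] s2 den a_def ..
  have apos: "a > 0" using pA a_def by simp
  have "G * cc (Suc m) / a > 0" using assms(5) b2 by simp
  then have Gpos: "G > 0" by (rule pos_helper[OF _ cc_pos apos])
  have "bridge_back_prob k w m u v = (G * (T * cc m) / a) / (G * cc (Suc m) / a)"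
    unfolding bridge_back_prob_def b1 b2 ..
  also have "\<dots> = T * cc m / cc (Suc m)" by (rule ratio_helper[OF Gpos apos])
  finally have bb: "bridge_back_prob k w m u v = T * cc m / cc (Suc m)" .
  have T: "T = real (subword_count v u) / (real (2*m+1) * real (2*m+2))"
  proof -
    have "T = real (Ncount u v) / (real (Suc (length u)) * real (Suc (Suc (length u))))"
      unfolding T_def by (rule pmf_step)
    moreover have "Ncount u v = subword_count v u"
      using Ncount_R[of v u] subword_R[OF assms(6,3)] length_W[OF assms(6)] length_W[OF assms(3)] by simp
    ultimately show ?thesis using length_W[OF assms(6)] by simp
  qed
  have cs: "cc (Suc m) = cc m * (real (m+1))^2 / (real (2*m+1) * real (2*m+2))" by simp
  have "bridge_back_prob k w m u v = (real (subword_count v u) / (real (2*m+1) * real (2*m+2))) * cc m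
      / (cc m * (real (m+1))^2 / (real (2*m+1) * real (2*m+2)))"
    unfolding bb T cs ..
  also have "\<dots> = real (subword_count v u) / (real (m + 1))^2"
    by (rule final_helper) (simp_all add: cc_pos)
  finally show ?thesis .
qed

end
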